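(* Let $n\geq 6$ be an integer, $K$ a field, $R=K[x_1,\dots,x_n]$, and let $I_n$ be the ideal of $R$ generated by the monomials $x_1x_3,\dots,x_1x_{n-1}$; $x_2x_4,\dots,x_2x_n$; $x_3x_5,\dots,x_3x_n$; $x_4x_n,\dots,x_{n-2}x_n$. Let $B=(b_{ij})_{i,j=1,\dots,n-3}$ be the matrix defined by: $b_{jj}=x_1$ for $j=1,\dots,n-4$ and $b_{n-3,n-3}=x_3$; $b_{j+1,j}=x_2$ for $j=1,\dots,n-4$; $b_{ij}=0$ if $i\geq j+2$; $b_{j-1,j}=x_3x_{3+j}$ for $j=2,\dots,n-4$; $b_{1,n-3}=x_2$ and $b_{i,n-3}=x_{2+i}$ for $i=2,\dots,n-4$; $b_{ij}=0$ if $j\geq i+2$ and $j\neq n-3$. Let $D=\det B-(-1)^n x_2^{n-3}$. Then: (a) $D\in I_n$; (b) $D-x_1^{n-4}x_3\in x_2\,(x_4,\dots,x_n)$, where $(x_4,\dots,x_n)$ is the ideal of $R$ generated by $x_4,\dots,x_n$. *)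

theory Defs
  imports "HOL-Library.Poly_Mapping" "Jordan_Normal_Form.Determinant"
begin

type_synonym 'a mpoly = "(nat \<Rightarrow>\<^sub>0 nat) \<Rightarrow>\<^sub>0 'a"

definition var :: "nat \<Rightarrow> 'a::comm_ring_1 mpoly" where
  "var i = Poly_Mapping.single (Poly_Mapping.single i 1) 1"

definition ideal_gen :: "'a::comm_ring_1 set \<Rightarrow> 'a set" where
  "ideal_gen S = {y. \<exists>T f. finite T \<and> T \<subseteq> S \<and> y = (\<Sum>s\<in>T. f s * s)}"

definition I_gens :: "nat \<Rightarrow> 'a::comm_ring_1 mpoly set" where
  "I_gens n = {var 1 * var j | j. 3 \<le> j \<and> j \<le> n - 1}
            \<union> {var 2 * var j | j. 4 \<le> j \<and> j \<le> n}
            \<union> {var 3 * var j | j. 5 \<le> j \<and> j \<le> n}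
            \<union> {var i * var n | i. 4 \<le> i \<and> i \<le> n - 2}"

text \<open>Entries b_{ij} of B, 1-based indices i, j in {1..n-3}.\<close>
definition bB :: "nat \<Rightarrow> nat \<Rightarrow> nat \<Rightarrow> 'a::comm_ring_1 mpoly" where
  "bB n i j =
    (if i = j then (if j \<le> n - 4 then var 1 else var 3)
     else if i = j + 1 then var 2
     else if i \<ge> j + 2 then 0
     else if j = n - 3 then (if i = 1 then var 2 else var (2 + i))
     else if i + 1 = j then var 3 * var (3 + j)
     else 0)"

definition matB :: "nat \<Rightarrow> 'a::comm_ring_1 mpoly mat" where
  "matB n = mat (n - 3) (n - 3) (\<lambda>(i, j). bB n (i + 1) (j + 1))"

end

theory Submission imports Defs begin

lemma ig_zero: "0 \<in> ideal_gen S"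
  unfolding ideal_gen_def by (rule CollectI, rule exI[of _ "{}"]) auto

lemma ig_base: "s \<in> S \<Longrightarrow> s \<in> ideal_gen S"
  unfolding ideal_gen_def by (auto intro!: exI[of _ "{s}"] exI[of _ "\<lambda>_. 1"])

lemma ig_add: assumes "x \<in> ideal_gen S" "y \<in> ideal_gen S" shows "x + y \<in> ideal_gen S"
proof -
  obtain T1 f1 where 1: "finite T1" "T1 \<subseteq> S" "x = (\<Sum>s\<in>T1. f1 s * s)"
    using assms(1) unfolding ideal_gen_def by blast
  obtain T2 f2 where 2: "finite T2" "T2 \<subseteq> S" "y = (\<Sum>s\<in>T2. f2 s * s)"
    using assms(2) unfolding ideal_gen_def by blast
  define f where "f s = (if s \<in> T1 then f1 s else 0) + (if s \<in> T2 then f2 s else 0)" for s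
  have "(\<Sum>s\<in>T1\<union>T2. f s * s) = (\<Sum>s\<in>T1\<union>T2. (if s \<in> T1 then f1 s * s else 0))
      + (\<Sum>s\<in>T1\<union>T2. (if s \<in> T2 then f2 s * s else 0))"
    unfolding f_def by (auto simp: algebra_simps sum.distrib[symmetric] intro!: sum.cong)
  also have "\<dots> = x + y" proof -
    have a: "(T1 \<union> T2) \<inter> T1 = T1" "(T1 \<union> T2) \<inter> T2 = T2" by blast+
    have "(\<Sum>s\<in>T1\<union>T2. (if s \<in> T1 then f1 s * s else 0)) = (\<Sum>s\<in>(T1\<union>T2)\<inter>T1. f1 s * s)"
      by (rule sum.inter_restrict[symmetric]) (use 1 2 in auto)
    moreover have "(\<Sum>s\<in>T1\<union>T2. (if s \<in> T2 then f2 s * s else 0)) = (\<Sum>s\<in>(T1\<union>T2)\<inter>T2. f2 s * s)"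
      by (rule sum.inter_restrict[symmetric]) (use 1 2 in auto)
    ultimately show ?thesis using 1 2 a by simp
  qed
  finally show ?thesis unfolding ideal_gen_def using 1 2 by (auto intro!: exI[of _ "T1 \<union> T2"] exI[of _ f])
qed

lemma ig_mult: assumes "y \<in> ideal_gen S" shows "r * y \<in> ideal_gen S"
proof -
  obtain T f where 1: "finite T" "T \<subseteq> S" "y = (\<Sum>s\<in>T. f s * s)"
    using assms unfolding ideal_gen_def by blast
  have "r * y = (\<Sum>s\<in>T. (r * f s) * s)" unfolding 1(3) sum_distrib_left by (simp add: mult.assoc)
  then show ?thesis unfolding ideal_gen_def using 1(1,2) by (auto intro!: exI[of _ T] exI[of _ "\<lambda>s. r * f s"])
qed

lemma ig_diff: assumes "x \<in> ideal_gen S" "y \<in> ideal_gen S" shows "x - y \<in> ideal_gen S"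
proof -
  have "x + (-1) * y \<in> ideal_gen S" by (intro ig_add ig_mult assms)
  then show ?thesis by simp
qed

lemma ig_sum: "finite A \<Longrightarrow> (\<And>a. a \<in> A \<Longrightarrow> h a \<in> ideal_gen S) \<Longrightarrow> sum h A \<in> ideal_gen S"
proof (induction A rule: finite_induct)
  case empty
  then show ?case by (simp add: ig_zero)
next
  case (insert x F)
  then show ?case by (simp add: ig_add)
qed

lemma ig_trans: assumes "y \<in> ideal_gen S" "\<And>s. s \<in> S \<Longrightarrow> g * s \<in> ideal_gen S'"
  shows "g * y \<in> ideal_gen S'"
proof -
  obtain T f where 1: "finite T" "T \<subseteq> S" "y = (\<Sum>s\<in>T. f s * s)"
    using assms unfolding ideal_gen_def by blast
  have "g * y = (\<Sum>s\<in>T. f s * (g * s))" unfolding 1(3) sum_distrib_left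
    by (intro sum.cong refl) (rule mult.left_commute)
  also have "\<dots> \<in> ideal_gen S'" 
    
  proof (rule ig_sum[OF 1(1)])
    fix a assume "a \<in> T"
    then have "g * a \<in> ideal_gen S'" using 1(2) assms(2) by blast
    then show "f a * (g * a) \<in> ideal_gen S'" by (rule ig_mult)
  qed
  finally show ?thesis .
qed

definition Hm :: "'a::comm_ring_1 \<Rightarrow> 'a \<Rightarrow> (nat \<Rightarrow> 'a) \<Rightarrow> nat \<Rightarrow> (nat \<Rightarrow> 'a) \<Rightarrow> 'a mat" where
  "Hm d s e k c = mat k k (\<lambda>(i,j). if j = k - 1 then c i else if i = j then d
      else if i = j+1 then s else if j = i+1 then e i else 0)"

definition Tm :: "'a::comm_ring_1 \<Rightarrow> 'a \<Rightarrow> (nat \<Rightarrow> 'a) \<Rightarrow> nat \<Rightarrow> 'a mat" where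
  "Tm d s e k = mat k k (\<lambda>(i,j). if i = j then d
      else if i = j+1 then s else if j = i+1 then e i else 0)"

lemma det0: "det (A :: 'a :: comm_ring_1 mat) = 1" if "A \<in> carrier_mat 0 0"
  using that by (simp add: det_def')

lemma H_one: "det (Hm d s e (Suc 0) c) = c 0"
proof -
  have A: "Hm d s e (Suc 0) c \<in> carrier_mat (Suc 0) (Suc 0)" by (simp add: Hm_def)
  have "mat_delete (Hm d s e (Suc 0) c) 0 0 \<in> carrier_mat 0 0" using mat_delete_carrier[OF A] by simp
  then have "det (mat_delete (Hm d s e (Suc 0) c) 0 0) = 1" by (rule det0)
  then show ?thesis
    by (subst laplace_expansion_row[OF A, of 0]) (auto simp: cofactor_def Hm_def)
qed

lemma H_zero: assumes "\<And>i. i < k \<Longrightarrow> c i = 0" "k > 0" shows "det (Hm d s e k c) = 0"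
proof -
  have A: "Hm d s e k c \<in> carrier_mat k k" by (simp add: Hm_def)
  show ?thesis
    by (subst laplace_expansion_column[OF A, of "k-1"]) (use assms in \<open>auto simp: Hm_def\<close>)
qed

lemma H_rec: "det (Hm d s e (Suc (Suc k)) c) = c (Suc k) * det (Tm d s e (Suc k)) - s * det (Hm d s e (Suc k) c)"
proof -
  let ?A = "Hm d s e (Suc (Suc k)) c"
  have A: "?A \<in> carrier_mat (Suc (Suc k)) (Suc (Suc k))" by (simp add: Hm_def)
  have "det ?A = (\<Sum>j<Suc (Suc k). ?A $$ (Suc k, j) * cofactor ?A (Suc k) j)"
    by (rule laplace_expansion_row[OF A]) simp
  also have "\<dots> = (\<Sum>j<k. ?A $$ (Suc k, j) * cofactor ?A (Suc k) j) + ?A $$ (Suc k, k) * cofactor ?A (Suc k) k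
      + ?A $$ (Suc k, Suc k) * cofactor ?A (Suc k) (Suc k)" by simp
  also have "(\<Sum>j<k. ?A $$ (Suc k, j) * cofactor ?A (Suc k) j) = 0"
    by (rule sum.neutral) (auto simp: Hm_def)
  finally have D: "det ?A = ?A $$ (Suc k, k) * cofactor ?A (Suc k) k
      + ?A $$ (Suc k, Suc k) * cofactor ?A (Suc k) (Suc k)" by simp
  have M1: "mat_delete ?A (Suc k) (Suc k) = Tm d s e (Suc k)"
    by (rule eq_matI) (auto simp: mat_delete_def Hm_def Tm_def)
  have M2: "mat_delete ?A (Suc k) k = Hm d s e (Suc k) c"
    by (rule eq_matI) (auto simp: mat_delete_def Hm_def)
  show ?thesis unfolding D cofactor_def M1 M2 by (simp add: Hm_def)
qed

lemma T_rec: "det (Tm d s e (Suc (Suc k))) = d * det (Tm d s e (Suc k)) - s * e k * det (Tm d s e k)"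
proof -
  let ?A = "Tm d s e (Suc (Suc k))"
  let ?c = "\<lambda>i. if i = k then e k else 0"
  have A: "?A \<in> carrier_mat (Suc (Suc k)) (Suc (Suc k))" by (simp add: Tm_def)
  have "det ?A = (\<Sum>j<Suc (Suc k). ?A $$ (Suc k, j) * cofactor ?A (Suc k) j)"
    by (rule laplace_expansion_row[OF A]) simp
  also have "\<dots> = (\<Sum>j<k. ?A $$ (Suc k, j) * cofactor ?A (Suc k) j) + ?A $$ (Suc k, k) * cofactor ?A (Suc k) k
      + ?A $$ (Suc k, Suc k) * cofactor ?A (Suc k) (Suc k)" by simp
  also have "(\<Sum>j<k. ?A $$ (Suc k, j) * cofactor ?A (Suc k) j) = 0"
    by (rule sum.neutral) (auto simp: Tm_def)
  finally have D: "det ?A = ?A $$ (Suc k, k) * cofactor ?A (Suc k) k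
      + ?A $$ (Suc k, Suc k) * cofactor ?A (Suc k) (Suc k)" by simp
  have M1: "mat_delete ?A (Suc k) (Suc k) = Tm d s e (Suc k)"
    by (rule eq_matI) (auto simp: mat_delete_def Tm_def)
  have M2: "mat_delete ?A (Suc k) k = Hm d s e (Suc k) ?c"
    by (rule eq_matI) (auto simp: mat_delete_def Hm_def Tm_def)
  have M3: "det (Hm d s e (Suc k) ?c) = e k * det (Tm d s e k)"
  proof (cases k)
    case 0
    have "det (Tm d s e 0) = 1" by (rule det0) (simp add: Tm_def)
    then show ?thesis using H_one[of d s e ?c] 0 by simp
  next
    case (Suc k')
    have "det (Hm d s e (Suc k') ?c) = 0" by (rule H_zero) (auto simp: Suc)
    then show ?thesis unfolding Suc H_rec by simp
  qed
  show ?thesis unfolding D cofactor_def M1 M2 M3 by (simp add: Tm_def)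
qed

definition ee :: "nat \<Rightarrow> 'a::comm_ring_1 mpoly" where "ee i = var 3 * var (i+5)"
definition cc :: "nat \<Rightarrow> nat \<Rightarrow> 'a::comm_ring_1 mpoly" where
  "cc n i = (if i = 0 then var 2 else if i = n - 4 then var 3 else var (i+3))"

lemma matB_eq: "n \<ge> 6 \<Longrightarrow> matB n = Hm (var 1) (var 2) ee (n-3) (cc n)"
  by (rule eq_matI) (auto simp: matB_def Hm_def bB_def ee_def cc_def add.commute intro!: arg_cong[where f=var])

lemma varP: "4 \<le> j \<Longrightarrow> j \<le> n \<Longrightarrow> var j \<in> ideal_gen {var j | j. 4 \<le> j \<and> j \<le> n}"
  by (rule ig_base) auto

lemma T_one: "det (Tm d s e (Suc 0)) = d"
proof -
  have "Tm d s e (Suc 0) = Hm d s e (Suc 0) (\<lambda>_. d)" by (rule eq_matI) (auto simp: Tm_def Hm_def)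
  then show ?thesis by (simp add: H_one)
qed

lemma T_inv: "k + 3 \<le> n \<Longrightarrow> \<exists>p \<in> ideal_gen {var j | j. 4 \<le> j \<and> j \<le> n}.
   det (Tm (var 1) (var 2) ee k) = (var 1 :: 'a::comm_ring_1 mpoly) ^ k + var 2 * p"
proof (induction k rule: nat_less_induct)
  case (1 k)
  show ?case
  proof (cases k)
    case 0
    have "det (Tm (var 1) (var 2) ee 0) = (1 :: 'a mpoly)" by (rule det0) (simp add: Tm_def)
    then show ?thesis using 0 by (intro bexI[of _ 0] ig_zero) auto
  next
    case (Suc k1)
    show ?thesis
    proof (cases k1)
      case 0
      then show ?thesis using Suc T_one by (intro bexI[of _ 0] ig_zero) auto
    next
      case (Suc k')
      have kk: "k = Suc (Suc k')" using Suc \<open>k = Suc k1\<close> by simp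
      obtain p1 where p1: "p1 \<in> ideal_gen {var j | j. 4 \<le> j \<and> j \<le> n}"
        "det (Tm (var 1) (var 2) ee (Suc k')) = (var 1 :: 'a mpoly) ^ (Suc k') + var 2 * p1"
      proof -
        have "Suc k' < k" "Suc k' + 3 \<le> n" using "1.prems" kk by auto
        then show ?thesis using "1.IH" that by blast
      qed
      let ?t = "det (Tm (var 1) (var 2) ee k') :: 'a mpoly"
      define p where "p = var 1 * p1 - ?t * var 3 * var (k' + 5)"
      have "p \<in> ideal_gen {var j | j. 4 \<le> j \<and> j \<le> n}"
        unfolding p_def using "1.prems" kk by (intro ig_diff ig_mult p1(1) varP) auto
      moreover have "det (Tm (var 1) (var 2) ee k) = (var 1 :: 'a mpoly) ^ k + var 2 * p"
        unfolding kk T_rec p1(2) p_def by (simp add: ee_def algebra_simps)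
      ultimately show ?thesis by blast
    qed
  qed
qed

lemma H_inv: "1 \<le> k \<Longrightarrow> k \<le> n - 4 \<Longrightarrow> n \<ge> 6 \<Longrightarrow>
  det (Hm (var 1) (var 2) ee k (cc n)) - (-1)^(k+1) * (var 2 :: 'a::comm_ring_1 mpoly) ^ k
    \<in> ideal_gen {var j | j. 4 \<le> j \<and> j \<le> n}"
proof (induction k)
  case 0
  then show ?case by simp
next
  case (Suc k)
  show ?case
  proof (cases k)
    case 0
    then show ?thesis by (simp add: H_one cc_def ig_zero)
  next
    case (Suc k'')
    let ?P = "ideal_gen {var j | j. 4 \<le> j \<and> j \<le> n} :: 'a mpoly set"
    have IH: "det (Hm (var 1) (var 2) ee k (cc n)) - (-1)^(k+1) * (var 2 :: 'a mpoly) ^ k \<in> ?P"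
      using Suc.IH Suc.prems Suc by simp
    have c: "cc n k = (var (k+3) :: 'a mpoly)" using Suc.prems Suc unfolding cc_def by auto
    have e: "det (Hm (var 1) (var 2) ee (Suc k) (cc n)) - (-1)^(Suc k+1) * (var 2 :: 'a mpoly) ^ (Suc k)
      = det (Tm (var 1) (var 2) ee k) * var (k+3) - var 2 * (det (Hm (var 1) (var 2) ee k (cc n)) - (-1)^(k+1) * (var 2 :: 'a mpoly) ^ k)"
      unfolding Suc H_rec c[unfolded Suc] by (simp add: algebra_simps)
    have v: "var (k+3) \<in> ?P" using Suc.prems \<open>k = Suc k''\<close> by (intro varP) auto
    show ?thesis unfolding e by (rule ig_diff[OF ig_mult[OF v] ig_mult[OF IH]])
  qed
qed

theorem lemma2p1:
  fixes n :: nat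
  assumes "n \<ge> 6"
  defines "D \<equiv> det (matB n :: 'a::field mpoly mat) - (-1) ^ n * var 2 ^ (n - 3)"
  shows "D \<in> ideal_gen (I_gens n) \<and>
         D - var 1 ^ (n - 4) * var 3 \<in> {var 2 * r | r. r \<in> ideal_gen {var j | j. 4 \<le> j \<and> j \<le> n}}"
proof -
  let ?P = "ideal_gen {var j | j. 4 \<le> j \<and> j \<le> n} :: 'a mpoly set"
  obtain q where q: "n = q + 6" using assms(1) by (metis add.commute le_Suc_ex)
  have n3: "n - 3 = Suc (Suc (q + 1))" and n4: "n - 4 = Suc (q+1)" using q by auto
  obtain p where p: "p \<in> ?P" "det (Tm (var 1) (var 2) ee (n-4)) = (var 1 :: 'a mpoly) ^ (n-4) + var 2 * p"
    using T_inv[of "n-4" n] assms(1) by auto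
  define r where "r = det (Hm (var 1) (var 2) ee (n-4) (cc n)) - (-1)^(n-4+1) * (var 2 :: 'a mpoly) ^ (n-4)"
  have r: "r \<in> ?P" unfolding r_def using assms(1) by (intro H_inv) auto
  have c: "cc n (n-4) = (var 3 :: 'a mpoly)" using assms(1) by (simp add: cc_def)
  have detB: "det (matB n :: 'a mpoly mat) = var 3 * det (Tm (var 1) (var 2) ee (n-4))
      - var 2 * det (Hm (var 1) (var 2) ee (n-4) (cc n))"
    unfolding matB_eq[OF assms(1)] n3 H_rec using c n4 by simp
  have Deq: "D = var 3 * det (Tm (var 1) (var 2) ee (n-4)) - var 2 * r"
    unfolding D_def detB r_def unfolding q by (simp add: algebra_simps power_add power3_eq_cube)
  have Db: "D - var 1 ^ (n - 4) * var 3 = var 2 * (var 3 * p - r)"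
    unfolding Deq p(2) by (simp add: algebra_simps)
  have b: "var 3 * p - r \<in> ?P" using p(1) r by (intro ig_diff ig_mult)
  have "D = (var 1 * var 3) * var 1 ^ (n - 5) + var 2 * (var 3 * p - r)"
    unfolding Deq p(2) unfolding q by (simp add: algebra_simps)
  moreover have "(var 1 * var 3 :: 'a mpoly) \<in> I_gens n" unfolding I_gens_def using assms(1) by auto
  moreover have "var 2 * (var 3 * p - r) \<in> ideal_gen (I_gens n)"
    by (rule ig_trans[OF b]) (auto simp: I_gens_def intro!: ig_base)
  ultimately have a: "D \<in> ideal_gen (I_gens n)"
  proof -
    assume h: "D = (var 1 * var 3) * var 1 ^ (n - 5) + var 2 * (var 3 * p - r)"
      "(var 1 * var 3 :: 'a mpoly) \<in> I_gens n" "var 2 * (var 3 * p - r) \<in> ideal_gen (I_gens n)"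
    have "var 1 ^ (n - 5) * (var 1 * var 3) \<in> (ideal_gen (I_gens n) :: 'a mpoly set)"
      by (rule ig_mult[OF ig_base[OF h(2)]])
    then have "(var 1 * var 3) * var 1 ^ (n - 5) \<in> (ideal_gen (I_gens n) :: 'a mpoly set)" by (simp add: mult.commute)
    then show ?thesis unfolding h(1) using h(3) by (rule ig_add)
  qed
  show ?thesis using a Db b by blast
qed

end
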